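(* Let $G$ be a graph and let $H=(v_1,v_2,C)$ be an induced subdivision of the $2$-pan in $G$ having the minimum number of vertices among all induced subdivisions of the $2$-pan in $G$, where $C$ is the cycle of $H$, $v_1$ is the vertex of degree $1$, and $v_2$ is the vertex of degree $2$ not on $C$. If $|V(C)|\ge 11$, then every vertex $v\in V(G)\setminus V(H)$ either has at most one neighbor in $V(C)$ or is adjacent to every vertex of $C$.
   Context: All graphs are finite and simple. An induced subdivision of a graph $F$ in $G$ is an induced subgraph of $G$ isomorphic to a graph obtained from $F$ by repeatedly replacing edges by paths of length $2$ through new vertices. The $2$-pan is the graph obtained from the disjoint union of a triangle and a path with $2$ edges by identifying one endpoint of the path with a vertex of the triangle; an induced subdivision of it consists of an induced cycle $C$ and an induced path $v_1v_2$ such that $v_2$ has exactly one neighbor on $C$ and $v_1$ has none. *)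

theory Defs
  imports Main
begin

definition graph :: "'a set \<Rightarrow> ('a \<Rightarrow> 'a \<Rightarrow> bool) \<Rightarrow> bool" where
  "graph V E \<longleftrightarrow> finite V \<and> (\<forall>u v. E u v \<longrightarrow> E v u) \<and> (\<forall>u. \<not> E u u)
     \<and> (\<forall>u v. E u v \<longrightarrow> u \<in> V \<and> v \<in> V)"

definition induced_cycle :: "'a set \<Rightarrow> ('a \<Rightarrow> 'a \<Rightarrow> bool) \<Rightarrow> 'a list \<Rightarrow> bool" where
  "induced_cycle V E C \<longleftrightarrow> length C \<ge> 3 \<and> distinct C \<and> set C \<subseteq> V \<and>
     (\<forall>i<length C. \<forall>j<length C.
        E (C ! i) (C ! j) \<longleftrightarrow> (j = Suc i mod length C \<or> i = Suc j mod length C))"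

definition pan2_subdiv :: "'a set \<Rightarrow> ('a \<Rightarrow> 'a \<Rightarrow> bool) \<Rightarrow> 'a \<Rightarrow> 'a \<Rightarrow> 'a list \<Rightarrow> bool" where
  "pan2_subdiv V E v1 v2 C \<longleftrightarrow> induced_cycle V E C \<and> v1 \<in> V \<and> v2 \<in> V \<and>
     v1 \<notin> set C \<and> v2 \<notin> set C \<and> v1 \<noteq> v2 \<and> E v1 v2 \<and>
     card {u \<in> set C. E v2 u} = 1 \<and> (\<forall>u\<in>set C. \<not> E v1 u)"

definition pan2_verts :: "'a \<Rightarrow> 'a \<Rightarrow> 'a list \<Rightarrow> 'a set" where
  "pan2_verts v1 v2 C = insert v1 (insert v2 (set C))"

end

theory Submission
  imports Defs "HOL-Number_Theory.Cong"
begin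


lemma mod_cancel_l: "((t::nat) + j) mod n = (t + k) mod n \<longleftrightarrow> j mod n = k mod n"
  using cong_add_lcancel_nat[of t j k n] unfolding cong_def by simp

lemma ic_adj:
  assumes "induced_cycle V E C" "i < length C" "j < length C"
  shows "E (C!i) (C!j) = (j = Suc i mod length C \<or> i = Suc j mod length C)"
  using assms unfolding induced_cycle_def by blast

lemma rot_ic:
  assumes "induced_cycle V E C"
  shows "induced_cycle V E (rotate t C)"
proof -
  let ?n = "length C"
  have n0: "?n > 0" using assms unfolding induced_cycle_def by auto
  have key: "((t+j) mod ?n = Suc ((t+i) mod ?n) mod ?n) = (j = Suc i mod ?n)"
    if "i < ?n" "j < ?n" for i j
  proof -
    have "Suc ((t+i) mod ?n) mod ?n = (t + Suc i) mod ?n" by (simp add: mod_Suc_eq)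
    then show ?thesis using mod_cancel_l[of t j ?n "Suc i"] that by simp
  qed
  show ?thesis
    unfolding induced_cycle_def
  proof (intro conjI allI impI)
    show "3 \<le> length (rotate t C)" using assms unfolding induced_cycle_def by simp
    show "distinct (rotate t C)" using assms unfolding induced_cycle_def by simp
    show "set (rotate t C) \<subseteq> V" using assms unfolding induced_cycle_def by simp
    fix i j assume i: "i < length (rotate t C)" and j: "j < length (rotate t C)"
    have "E (rotate t C ! i) (rotate t C ! j) = E (C ! ((t+i) mod ?n)) (C ! ((t+j) mod ?n))"
      using i j by (simp add: nth_rotate)
    also have "\<dots> = ((t+j) mod ?n = Suc ((t+i) mod ?n) mod ?n \<or> (t+i) mod ?n = Suc ((t+j) mod ?n) mod ?n)"
      using ic_adj[OF assms, of "(t+i) mod ?n" "(t+j) mod ?n"] n0 by simp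
    also have "\<dots> = (j = Suc i mod ?n \<or> i = Suc j mod ?n)" using key i j by simp
    finally show "E (rotate t C ! i) (rotate t C ! j) = (j = Suc i mod length (rotate t C) \<or> i = Suc j mod length (rotate t C))"
      by simp
  qed
qed




lemma suc_mod: "(x::nat) < n \<Longrightarrow> Suc x mod n = (if Suc x = n then 0 else Suc x)"
  by auto

lemma arc_ic:
  assumes ic: "induced_cycle V E C" and vV: "v \<in> V" and vC: "v \<notin> set C"
    and irr: "\<not> E v v" 
    and m1: "1 \<le> m" and mn: "m + 2 \<le> length C" and sm: "s + m < length C"
    and Es: "E v (C!s)" and Em: "E v (C!(s+m))"
    and int: "\<And>i. 0<i \<Longrightarrow> i<m \<Longrightarrow> \<not> E v (C!(s+i))"
    and Es': "E (C!s) v" and Em': "E (C!(s+m)) v"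
    and int': "\<And>i. 0<i \<Longrightarrow> i<m \<Longrightarrow> \<not> E (C!(s+i)) v"
  shows "induced_cycle V E (v # map (\<lambda>i. C!(s+i)) [0..<Suc m])"
proof -
  let ?n = "length C"
  let ?D = "v # map (\<lambda>i. C!(s+i)) [0..<Suc m]"
  have dC: "distinct C" and sC: "set C \<subseteq> V" using ic unfolding induced_cycle_def by auto
  have len: "length ?D = m + 2" by simp
  have nthD: "?D ! Suc k = C!(s+k)" if "k \<le> m" for k
    using that by (simp del: upt_Suc add: nth_map)
  have Cpair: "E (C!(s+i)) (C!(s+j)) = (Suc j = Suc (Suc i) mod (m+2) \<or> Suc i = Suc (Suc j) mod (m+2))"
    if i: "i \<le> m" and j: "j \<le> m" for i j
  proof -
    have "E (C!(s+i)) (C!(s+j)) = (s+j = Suc (s+i) mod ?n \<or> s+i = Suc (s+j) mod ?n)"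
      using ic_adj[OF ic, of "s+i" "s+j"] i j sm by simp
    moreover have "(s+j' = Suc (s+i') mod ?n) = (Suc j' = Suc (Suc i') mod (m+2))"
      if "i' \<le> m" and "j' \<le> m" for i' j'
      using that sm mn by (auto simp: suc_mod)
    ultimately show ?thesis using i j by blast
  qed
  show ?thesis
    unfolding induced_cycle_def
  proof (intro conjI allI impI)
    show "3 \<le> length ?D" using m1 by simp
    show "distinct ?D"
    proof -
      have "inj_on (\<lambda>i. C!(s+i)) {0..<Suc m}"
        using dC sm by (auto simp: inj_on_def nth_eq_iff_index_eq)
      moreover have "v \<notin> (\<lambda>i. C!(s+i)) ` {0..<Suc m}" using vC sm by auto
      ultimately show ?thesis by (simp del: upt_Suc add: distinct_map)
    qed
    show "set ?D \<subseteq> V" using vV sC sm by auto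
    fix i j assume i: "i < length ?D" and j: "j < length ?D"
    show "E (?D ! i) (?D ! j) = (j = Suc i mod length ?D \<or> i = Suc j mod length ?D)"
    proof (cases i)
      case 0
      then show ?thesis
      proof (cases j)
        case 0 then show ?thesis using \<open>i = 0\<close> irr m1 by simp
      next
        case (Suc j')
        have "j' \<le> m" using j Suc by simp
        then show ?thesis using \<open>i = 0\<close> Suc Es Em int m1
          by (cases "j' = 0"; cases "j' = m"; auto simp del: upt_Suc simp: suc_mod nthD)
      qed
    next
      case (Suc i')
      then show ?thesis
      proof (cases j)
        case 0
        have "i' \<le> m" using i Suc by simp
        then show ?thesis using \<open>j = 0\<close> Suc Es' Em' int' m1
          by (cases "i' = 0"; cases "i' = m"; auto simp del: upt_Suc simp: suc_mod nthD)
      next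
        case (Suc j')
        have "i' \<le> m" "j' \<le> m" using i j \<open>i = Suc i'\<close> Suc by auto
        then show ?thesis using Cpair[of i' j'] \<open>i = Suc i'\<close> Suc
          by (simp del: upt_Suc add: nthD)
      qed
    qed
  qed
qed




lemma tri_ic:
  assumes "a \<in> V" "b \<in> V" "c \<in> V" "a \<noteq> b" "b \<noteq> c" "a \<noteq> c"
    "E a b" "E b a" "E b c" "E c b" "E a c" "E c a" "\<not> E a a" "\<not> E b b" "\<not> E c c"
  shows "induced_cycle V E [a, b, c]"
  unfolding induced_cycle_def
proof (intro conjI allI impI)
  fix i j assume "i < length [a,b,c]" "j < length [a,b,c]"
  then have "i = 0 \<or> i = 1 \<or> i = 2" "j = 0 \<or> j = 1 \<or> j = 2" by auto
  then show "E ([a, b, c] ! i) ([a, b, c] ! j) =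
     (j = Suc i mod length [a, b, c] \<or> i = Suc j mod length [a, b, c])"
    using assms by (elim disjE) simp_all
qed (use assms in simp_all)

locale pctx =
  fixes V :: "'a set" and E :: "'a \<Rightarrow> 'a \<Rightarrow> bool" and v :: 'a and n :: nat
  assumes sym: "E a b \<Longrightarrow> E b a" and irr: "\<not> E a a"
    and vV: "v \<in> V" and n11: "11 \<le> n"
    and MIN: "\<And>D x y. induced_cycle V E D \<Longrightarrow> x \<in> V \<Longrightarrow> y \<in> V \<Longrightarrow> x \<notin> set D \<Longrightarrow>
       y \<notin> set D \<Longrightarrow> x \<noteq> y \<Longrightarrow> E y x \<Longrightarrow> card {u\<in>set D. E x u} = 1 \<Longrightarrow>
       (\<forall>u\<in>set D. \<not> E y u) \<Longrightarrow> n \<le> length D"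
begin

lemma pan_bound:
  assumes "induced_cycle V E D" "x \<in> V" "y \<in> V" "x \<notin> set D" "y \<notin> set D" "x \<noteq> y" "E y x"
    "w \<in> set D" "E x w" "\<And>u. u \<in> set D \<Longrightarrow> E x u \<Longrightarrow> u = w" "\<And>u. u \<in> set D \<Longrightarrow> \<not> E y u"
  shows "n \<le> length D"
proof -
  have "{u\<in>set D. E x u} = {w}" using assms(8,9,10) by blast
  then show ?thesis using MIN[OF assms(1-7)] assms(11) by simp
qed

lemma arc_contra:
  assumes ic: "induced_cycle V E C" and len: "length C = n" and vC: "v \<notin> set C"
    and m1: "1 \<le> m" and mn: "m + 2 \<le> n" and sm: "s + m < n"
    and Es: "E v (C!s)" and Em: "E v (C!(s+m))" and int: "\<And>i. 0<i \<Longrightarrow> i<m \<Longrightarrow> \<not> E v (C!(s+i))"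
    and xV: "x \<in> V" and yV: "y \<in> V" and xy: "x \<noteq> y" and Eyx: "E y x"
    and xv: "x \<noteq> v" and yv: "y \<noteq> v" and xC: "\<And>i. i \<le> m \<Longrightarrow> x \<noteq> C!(s+i)"
    and yC: "\<And>i. i\<le>m \<Longrightarrow> y \<noteq> C!(s+i)"
    and wD: "w = v \<or> (\<exists>i\<le>m. w = C!(s+i))" and Exw: "E x w"
    and xu1: "E x v \<Longrightarrow> w = v" and xu2: "\<And>i. i \<le> m \<Longrightarrow> E x (C!(s+i)) \<Longrightarrow> C!(s+i) = w"
    and yu1: "\<not> E y v" and yu2: "\<And>i. i \<le> m \<Longrightarrow> \<not> E y (C!(s+i))"
  shows "n \<le> m + 2"
proof -
  let ?D = "v # map (\<lambda>i. C!(s+i)) [0..<Suc m]"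
  have icD: "induced_cycle V E ?D"
    by (rule arc_ic[OF ic vV vC irr m1 _ _ Es Em int sym[OF Es] sym[OF Em]])
      (use len mn sm in simp_all, metis int sym)
  have setD: "set ?D = insert v ((\<lambda>i. C!(s+i)) ` {0..<Suc m})"
    by (simp del: upt_Suc)
  have "n \<le> length ?D"
  proof (rule pan_bound[OF icD xV yV _ _ xy Eyx _ Exw])
    show "x \<notin> set ?D"
    proof
      assume "x \<in> set ?D"
      then have "x = v \<or> (\<exists>i\<le>m. x = C!(s+i))" unfolding setD by (auto simp: less_Suc_eq_le)
      then show False using xv xC by blast
    qed
    show "y \<notin> set ?D"
    proof
      assume "y \<in> set ?D"
      then have "y = v \<or> (\<exists>i\<le>m. y = C!(s+i))" unfolding setD by (auto simp: less_Suc_eq_le)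
      then show False using yv yC by blast
    qed
    show "w \<in> set ?D" unfolding setD using wD by auto
    show "u = w" if "u \<in> set ?D" "E x u" for u
      using that xu1 xu2 unfolding setD by auto
    show "\<not> E y u" if "u \<in> set ?D" for u
      using that yu1 yu2 unfolding setD by auto
  qed
  then show ?thesis by simp
qed

lemma two_nbrs:
  assumes "2 \<le> card {u\<in>set C. E v u}"
  obtains i j where "i < length C" "j < length C" "i \<noteq> j" "E v (C!i)" "E v (C!j)"
proof -
  have "\<exists>u w. u \<in> {u\<in>set C. E v u} \<and> w \<in> {u\<in>set C. E v u} \<and> u \<noteq> w"
  proof (rule ccontr)
    assume "\<not> ?thesis"
    then have "card {u\<in>set C. E v u} \<le> Suc 0" by (subst card_le_Suc0_iff_eq) auto
    with assms show False by simp
  qed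
  then obtain u w where uw: "u \<in> set C" "w \<in> set C" "E v u" "E v w" "u \<noteq> w" by auto
  from uw obtain i where "i < length C" "u = C!i" by (auto simp: in_set_conv_nth)
  moreover from uw obtain j where "j < length C" "w = C!j" by (auto simp: in_set_conv_nth)
  ultimately show ?thesis using that uw by metis
qed

lemma case1core:
  assumes ic: "induced_cycle V E C" and len: "length C = n" and vC: "v \<notin> set C"
    and two: "2 \<le> card {u\<in>set C. E v u}" and n0: "\<not> E v (C!0)" and n1: "\<not> E v (C!1)"
  shows "\<forall>k<n. E v (C!k) \<longleftrightarrow> (k = 2 \<or> k = n - 1)"
proof -
  have dC: "distinct C" and sC: "set C \<subseteq> V" using ic unfolding induced_cycle_def by auto
  have inj: "C!k = C!l \<longleftrightarrow> k = l" if "k < n" "l < n" for k l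
    using dC that len by (simp add: nth_eq_iff_index_eq)
  have CV: "C!k \<in> V" if "k < n" for k using sC that len by auto
  have adj: "E (C!k) (C!l) = (l = Suc k mod n \<or> k = Suc l mod n)" if "k < n" "l < n" for k l
    using ic_adj[OF ic] that len by auto
  obtain i j where ij: "i<n" "j<n" "i\<noteq>j" "E v (C!i)" "E v (C!j)"
    using two_nbrs[OF two] len by metis
  define a where "a = (LEAST a. a < n \<and> E v (C!a))"
  have aP: "a < n \<and> E v (C!a)" unfolding a_def by (rule LeastI[of _ i]) (use ij in auto)
  have aMin: "\<not> E v (C!k)" if "k < a" for k
    using not_less_Least[of k "\<lambda>a. a<n \<and> E v (C!a)"] that aP unfolding a_def by auto
  have a2: "2 \<le> a"
  proof (rule ccontr)
    assume "\<not> 2 \<le> a" then have "a = 0 \<or> a = 1" by auto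
    then show False using aP n0 n1 by auto
  qed
  have "\<exists>b. a < b \<and> b < n \<and> E v (C!b)"
  proof (cases "i = a")
    case True then show ?thesis using ij aMin[of j] by (metis linorder_neqE_nat)
  next
    case False then show ?thesis using ij aMin[of i] by (metis linorder_neqE_nat)
  qed
  then obtain b0 where b0: "a < b0 \<and> b0 < n \<and> E v (C!b0)" by blast
  define b where "b = (LEAST b. a < b \<and> b < n \<and> E v (C!b))"
  have bP: "a < b \<and> b < n \<and> E v (C!b)" unfolding b_def by (rule LeastI[of _ b0]) (use b0 in auto)
  have bMin: "\<not> E v (C!k)" if "a < k" "k < b" for k
    using not_less_Least[of k "\<lambda>b. a < b \<and> b<n \<and> E v (C!b)"] that bP unfolding b_def by auto
  have aLt: "a < n" and aN: "E v (C!a)" using aP by auto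
  have bLt: "a < b" "b < n" and bN: "E v (C!b)" using bP by auto
  have ab: "a = 2 \<and> b = n - 1"
  proof (rule ccontr)
    assume nab: "\<not> (a = 2 \<and> b = n - 1)"
    have "n \<le> (b - a) + 2"
    proof (rule arc_contra[OF ic len vC, of "b - a" a "C!(a-1)" "C!(a-2)" "C!a"])
      show "1 \<le> b - a" using bLt bN by linarith
      show "b - a + 2 \<le> n" using bLt bN a2 by linarith
      show "a + (b - a) < n" using bLt bN by simp
      show "E v (C!a)" using aLt aN by simp
      show "E v (C!(a + (b - a)))" using bLt bN by simp
      show "\<not> E v (C!(a+i))" if "0 < i" "i < b - a" for i using bMin that by simp
      show "C!(a-1) \<in> V" "C!(a-2) \<in> V" using CV aLt aN by auto
      show "C!(a-1) \<noteq> C!(a-2)" using inj aLt aN a2 by auto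
      show "E (C!(a-2)) (C!(a-1))"
      proof -
        have e: "a - 1 = Suc (a - 2)" "a - 2 < n" "a - 1 < n" "Suc (a - 2) < n" using a2 aLt aN by arith+
        show ?thesis using adj[OF e(2,3)] e(1) e(4) by simp
      qed
      show "C!(a-1) \<noteq> v" "C!(a-2) \<noteq> v" using vC aLt aN len by auto
      show "C!(a-1) \<noteq> C!(a+i)" if "i \<le> b - a" for i
      proof
        assume eq: "C!(a-1) = C!(a+i)"
        have "a-1 < n" "a+i < n" using that bLt bN a2 by arith+
        with eq inj have "a-1 = a+i" by blast
        then show False using a2 by arith
      qed
      show "C!(a-2) \<noteq> C!(a+i)" if "i \<le> b - a" for i
      proof
        assume eq: "C!(a-2) = C!(a+i)"
        have "a-2 < n" "a+i < n" using that bLt bN a2 by arith+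
        with eq inj have "a-2 = a+i" by blast
        then show False using a2 by arith
      qed
      show "C!a = v \<or> (\<exists>i\<le>b-a. C!a = C!(a+i))" by (rule disjI2, rule exI[of _ 0]) simp
      show "E (C!(a-1)) (C!a)"
      proof -
        have e: "a - 1 < n" "a < n" "Suc (a - 1) = a" using aLt aN a2 by arith+
        show ?thesis using adj[OF e(1,2)] e(3) aLt aN by simp
      qed
      show "C!a = v" if "E (C!(a-1)) v" using that sym[of "C!(a-1)" v] aMin[of "a-1"] a2 by auto
      show "C!(a+i) = C!a" if "i \<le> b - a" "E (C!(a-1)) (C!(a+i))" for i
      proof -
        have "a + i < n" using that bLt by simp
        then have "a+i = Suc (a-1) mod n \<or> a-1 = Suc (a+i) mod n"
          using adj[of "a-1" "a+i"] that aLt aN by auto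
        then have "i = 0" using a2 aLt aN \<open>a+i<n\<close> by (auto simp: suc_mod split: if_splits)
        then show ?thesis by simp
      qed
      show "\<not> E (C!(a-2)) v" using sym[of "C!(a-2)" v] aMin[of "a-2"] a2 by auto
      show "\<not> E (C!(a-2)) (C!(a+i))" if "i \<le> b - a" for i
      proof
        assume e: "E (C!(a-2)) (C!(a+i))"
        have "a + i < n" using that bLt by simp
        then have "a+i = Suc (a-2) mod n \<or> a-2 = Suc (a+i) mod n"
          using adj[of "a-2" "a+i"] e aLt aN by auto
        then have "a = 2 \<and> a + i = n - 1" using a2 aLt aN \<open>a+i<n\<close> by (auto simp: suc_mod split: if_splits)
        then show False using nab that bLt bN by auto
      qed
    qed
    then show False using bLt bN a2 by simp
  qed
  show ?thesis
  proof (intro allI impI)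
    fix k assume k: "k < n"
    show "E v (C!k) \<longleftrightarrow> (k = 2 \<or> k = n - 1)"
    proof (cases "k < 2 \<or> (2 < k \<and> k < n - 1)")
      case True then show ?thesis using aMin bMin ab n11 by auto
    next
      case False
      then have "k = 2 \<or> k = n - 1" using k by auto
      then show ?thesis using aLt aN bLt bN ab n11 by auto
    qed
  qed
qed

end



context pctx begin

lemma adj_succ:
  assumes ic: "induced_cycle V E C" and len: "length C = n" and k: "Suc k < n"
  shows "E (C!k) (C!(Suc k))"
  using ic_adj[OF ic, of k "Suc k"] len k by simp

lemma short_arc:
  assumes ic: "induced_cycle V E C" and len: "length C = n"
    and noadj: "\<forall>u\<in>set C. \<forall>w\<in>set C. E u w \<longrightarrow> E v u \<or> E v w"
    and k: "k + 3 < n"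
  shows "\<exists>m. 1 \<le> m \<and> m \<le> 2 \<and> E v (C!(k+m)) \<and> (\<forall>i. 0<i \<longrightarrow> i<m \<longrightarrow> \<not> E v (C!(k+i)))"
proof (cases "E v (C!(k+1))")
  case True then show ?thesis by (intro exI[of _ 1]) auto
next
  case False
  have e: "E (C!(k+1)) (C!(k+2))" using adj_succ[OF ic len, of "k+1"] k by simp
  have "C!(k+1) \<in> set C" "C!(k+2) \<in> set C" using k len by auto
  then have "E v (C!(k+2))" using noadj e False by blast
  moreover have "\<forall>i. 0<i \<longrightarrow> i<2 \<longrightarrow> \<not> E v (C!(k+i))"
  proof (intro allI impI)
    fix i :: nat assume "0<i" "i<2" then have "i = 1" by simp
    then show "\<not> E v (C!(k+i))" using False by simp
  qed
  ultimately show ?thesis by (intro exI[of _ 2]) auto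
qed

lemma far_arc:
  assumes ic: "induced_cycle V E C" and len: "length C = n"
    and noadj: "\<forall>u\<in>set C. \<forall>w\<in>set C. E u w \<longrightarrow> E v u \<or> E v w"
  shows "\<exists>s m. 3 \<le> s \<and> 1 \<le> m \<and> m \<le> 2 \<and> s + m \<le> 6 \<and> E v (C!s) \<and> E v (C!(s+m))
     \<and> (\<forall>i. 0<i \<longrightarrow> i<m \<longrightarrow> \<not> E v (C!(s+i)))"
proof -
  have e: "E (C!3) (C!(Suc 3))" using adj_succ[OF ic len, of 3] n11 by simp
  have "C!3 \<in> set C" "C!(Suc 3) \<in> set C" using n11 len by auto
  then have "E v (C!3) \<or> E v (C!4)" using noadj e by auto
  then show ?thesis
  proof
    assume "E v (C!3)"
    moreover obtain m where "1 \<le> m \<and> m \<le> 2 \<and> E v (C!(3+m)) \<and> (\<forall>i. 0<i \<longrightarrow> i<m \<longrightarrow> \<not> E v (C!(3+i)))"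
      using short_arc[OF ic len noadj, of 3] n11 by auto
    ultimately show ?thesis by (intro exI[of _ 3] exI[of _ m]) auto
  next
    assume "E v (C!4)"
    moreover obtain m where "1 \<le> m \<and> m \<le> 2 \<and> E v (C!(4+m)) \<and> (\<forall>i. 0<i \<longrightarrow> i<m \<longrightarrow> \<not> E v (C!(4+i)))"
      using short_arc[OF ic len noadj, of 4] n11 by auto
    ultimately show ?thesis by (intro exI[of _ 4] exI[of _ m]) auto
  qed
qed

lemma nsym: assumes "\<not> E a b" shows "\<not> E b a"
proof
  assume "E b a"
  from sym[OF this] assms show False by simp
qed

lemma case2:
  assumes ic: "induced_cycle V E C" and len: "length C = n" and vC: "v \<notin> set C"
    and noadj: "\<forall>u\<in>set C. \<forall>w\<in>set C. E u w \<longrightarrow> E v u \<or> E v w"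
    and q: "q < n" and nq: "\<not> E v (C!q)"
    and v1V: "v1 \<in> V" and v2V: "v2 \<in> V" and v1C: "v1 \<notin> set C" and v2C: "v2 \<notin> set C"
    and v1v: "v1 \<noteq> v" and v2v: "v2 \<noteq> v" and v12: "v1 \<noteq> v2" and E12: "E v1 v2"
    and p: "p < n" and Ep: "E v2 (C!p)" and v2u: "\<And>u. u \<in> set C \<Longrightarrow> E v2 u \<Longrightarrow> u = C!p"
    and v1u: "\<And>u. u \<in> set C \<Longrightarrow> \<not> E v1 u"
  shows False
proof -
  have dC: "distinct C" and sC: "set C \<subseteq> V" using ic unfolding induced_cycle_def by auto
  have E21: "E v2 v1" using sym[OF E12] .
  have v2u': "u = C!p" if "u \<in> set C" "E u v2" for u using v2u[OF that(1) sym[OF that(2)]] .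
  have v1u': "\<not> E u v1" if "u \<in> set C" for u using v1u[OF that] sym[of u v1] by blast
  have rot: "induced_cycle V E (rotate t C)" "length (rotate t C) = n" "set (rotate t C) = set C" for t
    using rot_ic[OF ic] len by simp_all
  have rnth: "rotate t C ! k = C ! ((t+k) mod n)" if "k < n" for t k using nth_rotate[of k C t] that len by simp
  have rdist: "rotate t C ! k = rotate t C ! l \<longleftrightarrow> k = l" if "k < n" "l < n" for t k l
    using that rot(2)[of t] distinct_rotate[of t C] dC by (simp add: nth_eq_iff_index_eq)
  have rin: "rotate t C ! k \<in> set C" if "k < n" for t k
    using nth_mem[of k "rotate t C"] that rot(2,3)[of t] by simp
  have rV: "rotate t C ! k \<in> V" if "k < n" for t k using rin[OF that] sC by auto
  have radj: "E (rotate t C ! k) (rotate t C ! l) = (l = Suc k mod n \<or> k = Suc l mod n)" if "k < n" "l < n" for t k l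
    using ic_adj[OF rot(1)[of t], of k l] that rot(2)[of t] by simp
  have vC': "v \<notin> set (rotate t C)" for t using vC by simp
  have noadj': "\<forall>u\<in>set (rotate t C). \<forall>w\<in>set (rotate t C). E u w \<longrightarrow> E v u \<or> E v w" for t
    using noadj by simp
  define C' where "C' = rotate p C"
  have C0: "C'!0 = C!p" unfolding C'_def using rnth[of 0 p] p n11 by simp
  obtain s m where sm: "3 \<le> s" "1 \<le> m" "m \<le> 2" "s + m \<le> 6" "E v (C'!s)" "E v (C'!(s+m))"
    "\<And>i. 0<i \<Longrightarrow> i<m \<Longrightarrow> \<not> E v (C'!(s+i))"
    using far_arc[OF rot(1,2) noadj'[of p]] unfolding C'_def by blast
  have neq0: "C'!(s+i) \<noteq> C!p" if "i \<le> m" for i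
    using rdist[of "s+i" 0 p] that sm n11 C0 unfolding C'_def by simp
  have inC: "C'!(s+i) \<in> set C" if "i \<le> m" for i using rin[of "s+i" p] that sm n11 unfolding C'_def by simp
  have nv2: "\<not> E v2 (C'!(s+i))" if "i \<le> m" for i using v2u[OF inC[OF that]] neq0[OF that] by blast
  have nv2': "\<not> E (C'!(s+i)) v2" if "i \<le> m" for i using v2u'[OF inC[OF that]] neq0[OF that] by blast
  have nv1: "\<not> E v1 (C'!(s+i))" if "i \<le> m" for i using v1u[OF inC[OF that]] .
  have np: "\<not> E (C!p) (C'!(s+i))" if "i \<le> m" for i
  proof -
    have "E (C'!0) (C'!(s+i)) = (s+i = Suc 0 mod n \<or> 0 = Suc (s+i) mod n)"
      using radj[of 0 "s+i" p] that sm n11 unfolding C'_def by simp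
    moreover have "Suc (s+i) mod n = Suc (s+i)" "Suc 0 mod n = 1" using that sm n11 by simp_all
    ultimately show ?thesis using C0 sm by simp
  qed
  have v2ne: "v2 \<noteq> C'!(s+i)" "v1 \<noteq> C'!(s+i)" if "i \<le> m" for i
    using inC[OF that] v1C v2C by auto
  have pne: "C!p \<noteq> C'!(s+i)" if "i \<le> m" for i using neq0[OF that] by simp
  have ic': "induced_cycle V E C'" and len': "length C' = n" and vC'': "v \<notin> set C'"
    unfolding C'_def using rot vC' by auto
  have mn: "m + 2 \<le> n" "s + m < n" using sm n11 by auto
  have pV: "C!p \<in> V" using sC p len by auto
  have pC: "C!p \<noteq> v" using vC p len by auto
  have p2: "v2 \<noteq> C!p" using v2C p len by auto
  have far_done: False if "n \<le> m + 2" using that sm n11 by simp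
  show False
  proof (cases "E v v2")
    case v2T: True
    show False
    proof (cases "E v v1")
      case v1F: False
      have "n \<le> m + 2"
        by (rule arc_contra[OF ic' len' vC'' sm(2) mn sm(5,6,7) v2V v1V v12[symmetric] E12, where w=v])
          (use v2v v1v v2ne sym[OF v2T] nv2 nsym[OF v1F] nv1 in simp_all)
      then show False by (rule far_done)
    next
      case v1T: True
      show False
      proof (cases "E v (C!p)")
        case pF: False
        have "n \<le> m + 2"
          by (rule arc_contra[OF ic' len' vC'' sm(2) mn sm(5,6,7) v2V pV p2 sym[OF Ep], where w=v])
            (use v2v pC v2ne pne sym[OF v2T] nv2 nsym[OF pF] np in simp_all)
        then show False by (rule far_done)
      next
        case pT: True
        define B where "B = rotate q C"
        have B0: "B!0 = C!q" unfolding B_def using rnth[of 0 q] q n11 by simp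
        have Bq: "B!0 \<in> set C" "B!1 \<in> set C" "B!(n-1) \<in> set C" unfolding B_def using rin n11 by auto
        have e1: "E (B!0) (B!1)" unfolding B_def using radj[of 0 1 q] n11 by simp
        have e2: "E (B!0) (B!(n-1))" unfolding B_def using radj[of 0 "n-1" q] n11 by simp
        have nB0: "\<not> E v (B!0)" using B0 nq by simp
        have N1: "E v (B!1)" using noadj Bq e1 nB0 by blast
        have N2: "E v (B!(n-1))" using noadj Bq e2 nB0 by blast
        have d12: "B!1 \<noteq> B!(n-1)" unfolding B_def using rdist[of 1 "n-1" q] n11 by simp
        have qp: "C!q \<noteq> C!p" using nq pT by auto
        obtain x where x: "x = B!1 \<or> x = B!(n-1)" "x \<noteq> C!p"
        proof (cases "B!1 = C!p")
          case True then show ?thesis using that[of "B!(n-1)"] d12 by simp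
        next
          case False then show ?thesis using that[of "B!1"] by simp
        qed
        have xC: "x \<in> set C" and Ex0: "E (B!0) x" and xN: "E v x" using x Bq e1 e2 N1 N2 by auto
        have icT: "induced_cycle V E [v, v1, v2]"
          by (rule tri_ic) (use vV v1V v2V v1v v2v v12 v1T v2T E12 E21 sym[OF v1T] sym[OF v2T] irr in simp_all)
        have xV: "x \<in> V" "B!0 \<in> V" using xC Bq sC by auto
        have "n \<le> length [v, v1, v2]"
        proof (rule pan_bound[OF icT xV(1) xV(2) _ _ _ Ex0, where w=v])
          show "x \<notin> set [v, v1, v2]" using xC vC v1C v2C by auto
          show "B!0 \<notin> set [v, v1, v2]" using Bq vC v1C v2C by auto
          show "x \<noteq> B!0" using xN nB0 by auto
          show "v \<in> set [v, v1, v2]" by simp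
          show "E x v" using sym[OF xN] .
          show "u = v" if "u \<in> set [v, v1, v2]" "E x u" for u
          proof -
            have "\<not> E x v1" using v1u'[OF xC] .
            moreover have "\<not> E x v2" using v2u'[OF xC] x(2) by blast
            ultimately show ?thesis using that by auto
          qed
          show "\<not> E (B!0) u" if "u \<in> set [v, v1, v2]" for u
          proof -
            have "\<not> E (B!0) v" using nB0 sym[of "B!0" v] by blast
            moreover have "\<not> E (B!0) v1" using v1u'[OF Bq(1)] .
            moreover have "\<not> E (B!0) v2" using v2u'[OF Bq(1)] B0 qp by auto
            ultimately show ?thesis using that by auto
          qed
        qed
        then show False using n11 by simp
      qed
    qed
  next
    case v2F: False
    show False
    proof (cases "E v v1")
      case v1T: True
      have "n \<le> m + 2"
        by (rule arc_contra[OF ic' len' vC'' sm(2) mn sm(5,6,7) v1V v2V v12 E21, where w=v])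
          (use v2v v1v v2ne sym[OF v1T] nv1 nsym[OF v2F] nv2 v1u'[OF inC] in simp_all)
      then show False by (rule far_done)
    next
      case v1F: False
      have n2v: "\<not> E v2 v" using v2F sym[of v2 v] by blast
      have n1v: "\<not> E v1 v" using v1F sym[of v1 v] by blast
      show False
      proof (cases "E v (C!p)")
        case pT: True
        obtain m0 where m0: "1 \<le> m0" "m0 \<le> 2" "E v (C'!(0+m0))" "\<And>i. 0<i \<Longrightarrow> i<m0 \<Longrightarrow> \<not> E v (C'!(0+i))"
          using short_arc[OF rot(1,2) noadj'[of p], of 0] n11 unfolding C'_def by auto
        have inC0: "C'!(0+i) \<in> set C" if "i \<le> m0" for i using rin[of "0+i" p] that m0 n11 unfolding C'_def by simp
        have "n \<le> m0 + 2"
        proof (rule arc_contra[OF ic' len' vC'' m0(1) _ _ _ m0(3) m0(4) v2V v1V v12[symmetric] E12, where w="C!p"])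
          show "m0 + 2 \<le> n" "0 + m0 < n" using m0 n11 by auto
          show "E v (C'!0)" using pT C0 by simp
          show "v2 \<noteq> v" "v1 \<noteq> v" by fact+
          show "v2 \<noteq> C'!(0+i)" "v1 \<noteq> C'!(0+i)" if "i \<le> m0" for i using inC0[OF that] v1C v2C by auto
          show "C!p = v \<or> (\<exists>i\<le>m0. C!p = C'!(0+i))" using C0 by auto
          show "E v2 (C!p)" by fact
          show "C!p = v" if "E v2 v" using that n2v by simp
          show "C'!(0+i) = C!p" if "i \<le> m0" "E v2 (C'!(0+i))" for i using v2u[OF inC0[OF that(1)] that(2)] .
          show "\<not> E v1 v" by fact
          show "\<not> E v1 (C'!(0+i))" if "i \<le> m0" for i using v1u[OF inC0[OF that]] .
        qed
        then show False using m0 n11 by simp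
      next
        case pF: False
        define D where "D = rotate (p + n - 1) C"
        have D1: "D!1 = C!p" unfolding D_def using rnth[of 1 "p + n - 1"] p n11
          by (simp add: Suc_diff_le)
        have Din: "D!0 \<in> set C" "D!1 \<in> set C" "D!2 \<in> set C" unfolding D_def using rin n11 by auto
        have e1: "E (D!0) (D!1)" unfolding D_def using radj[of 0 1] n11 by simp
        have e2: "E (D!1) (D!2)" unfolding D_def using radj[of 1 2] n11 by simp
        have N0: "E v (D!0)" using noadj Din e1 pF D1 by metis
        have N2: "E v (D!2)" using noadj Din e2 pF D1 by metis
        have icD: "induced_cycle V E D" and lenD: "length D = n" and vD: "v \<notin> set D"
          unfolding D_def using rot vC' by auto
        have inD: "D!(0+i) \<in> set C" if "i \<le> 2" for i using rin[of "0+i" "p+n-1"] that n11 unfolding D_def by simp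
        have "n \<le> 2 + 2"
        proof (rule arc_contra[OF icD lenD vD _ _ _ _ _ _ v2V v1V v12[symmetric] E12, where w="C!p" and s=0 and m=2])
          show "1 \<le> (2::nat)" "2 + 2 \<le> n" "0 + 2 < n" using n11 by auto
          show "E v (D!0)" using N0 .
          show "E v (D!(0+2))" using N2 by (simp only: add_0)
          show "\<not> E v (D!(0+i))" if "0 < i" "i < 2" for i
          proof -
            have "i = 1" using that by simp
            then show ?thesis using pF D1 by simp
          qed
          show "v2 \<noteq> v" "v1 \<noteq> v" by fact+
          show "v2 \<noteq> D!(0+i)" "v1 \<noteq> D!(0+i)" if "i \<le> 2" for i using inD[OF that] v1C v2C by auto
          show "C!p = v \<or> (\<exists>i\<le>2. C!p = D!(0+i))" using D1 by (intro disjI2 exI[of _ 1]) simp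
          show "E v2 (C!p)" by fact
          show "C!p = v" if "E v2 v" using that n2v by simp
          show "D!(0+i) = C!p" if "i \<le> 2" "E v2 (D!(0+i))" for i using v2u[OF inD[OF that(1)] that(2)] .
          show "\<not> E v1 v" by fact
          show "\<not> E v1 (D!(0+i))" if "i \<le> 2" for i using v1u[OF inD[OF that]] .
        qed
        then show False using n11 by simp
      qed
    qed
  qed
qed

end



theorem mainTheorem14:
  fixes V :: "'a set" and E :: "'a \<Rightarrow> 'a \<Rightarrow> bool"
  assumes "graph V E"
    and "pan2_subdiv V E v1 v2 C"
    and "\<And>w1 w2 D. pan2_subdiv V E w1 w2 D \<Longrightarrow>
           card (pan2_verts v1 v2 C) \<le> card (pan2_verts w1 w2 D)"
    and "card (set C) \<ge> 11"
    and "v \<in> V - pan2_verts v1 v2 C"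
  shows "card {u \<in> set C. E v u} \<le> 1 \<or> (\<forall>u\<in>set C. E v u)"
proof -
  have symE: "\<And>a b. E a b \<Longrightarrow> E b a" and irrE: "\<And>a. \<not> E a a"
    using assms(1) unfolding graph_def by auto
  have icC: "induced_cycle V E C" and v1V: "v1 \<in> V" and v2V: "v2 \<in> V"
    and v1C: "v1 \<notin> set C" and v2C: "v2 \<notin> set C" and v12: "v1 \<noteq> v2" and E12: "E v1 v2"
    and card1: "card {u \<in> set C. E v2 u} = 1" and v1u: "\<forall>u\<in>set C. \<not> E v1 u"
    using assms(2) unfolding pan2_subdiv_def by auto
  obtain w where wset: "{u \<in> set C. E v2 u} = {w}" using card_1_singletonE[OF card1] by blast
  have wC: "w \<in> set C" and Ew: "E v2 w" and wu: "\<And>u. u \<in> set C \<Longrightarrow> E v2 u \<Longrightarrow> u = w"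
    using wset by auto
  define n where "n = length C"
  obtain p where p: "p < n" "w = C!p" using wC unfolding n_def by (auto simp: in_set_conv_nth)
  have dC: "distinct C" using icC unfolding induced_cycle_def by auto
  have cardC: "card (set C) = n" unfolding n_def using distinct_card[OF dC] .
  have n11: "11 \<le> n" using assms(4) cardC by simp
  have vV: "v \<in> V" and vv1: "v \<noteq> v1" and vv2: "v \<noteq> v2" and vC: "v \<notin> set C"
    using assms(5) unfolding pan2_verts_def by auto
  have cH: "card (pan2_verts v1 v2 C) = n + 2"
    unfolding pan2_verts_def using v1C v2C v12 cardC by simp
  have MIN: "n \<le> length D" if "induced_cycle V E D" "x \<in> V" "y \<in> V" "x \<notin> set D"
       "y \<notin> set D" "x \<noteq> y" "E y x" "card {u\<in>set D. E x u} = 1"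
       "\<forall>u\<in>set D. \<not> E y u" for D x y
  proof -
    have "pan2_subdiv V E y x D" unfolding pan2_subdiv_def using that by auto
    from assms(3)[OF this] have "card (pan2_verts v1 v2 C) \<le> card (pan2_verts y x D)" .
    moreover have "card (pan2_verts y x D) = length D + 2"
    proof -
      have "distinct D" using that(1) unfolding induced_cycle_def by auto
      then show ?thesis unfolding pan2_verts_def using that(4,5,6) by (simp add: distinct_card)
    qed
    ultimately show ?thesis using cH by simp
  qed
  interpret pctx V E v n
    by unfold_locales (use symE irrE vV n11 MIN in auto)
  show ?thesis
  proof (rule ccontr)
    assume "\<not> ?thesis"
    then have two: "2 \<le> card {u \<in> set C. E v u}" and ex: "\<exists>u\<in>set C. \<not> E v u" by auto
    show False
    proof (cases "\<forall>u\<in>set C. \<forall>w\<in>set C. E u w \<longrightarrow> E v u \<or> E v w")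
      case True
      obtain u where "u \<in> set C" "\<not> E v u" using ex by blast
      then obtain q where q: "q < n" "\<not> E v (C!q)" unfolding n_def by (auto simp: in_set_conv_nth)
      show False
        by (rule case2[OF icC n_def[symmetric] vC True q v1V v2V v1C v2C vv1[symmetric] vv2[symmetric] v12 E12 p(1)])
          (use Ew p(2) wu v1u in auto)
    next
      case False
      then obtain u w where uw: "u \<in> set C" "w \<in> set C" "E u w" "\<not> E v u" "\<not> E v w" by blast
      obtain i where i: "i < n" "u = C!i" using uw unfolding n_def by (auto simp: in_set_conv_nth)
      obtain j where j: "j < n" "w = C!j" using uw unfolding n_def by (auto simp: in_set_conv_nth)
      have "j = Suc i mod n \<or> i = Suc j mod n" using ic_adj[OF icC, of i j] i j uw unfolding n_def by simp
      then obtain t where t: "t < n" "\<not> E v (C!t)" "\<not> E v (C!(Suc t mod n))"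
        using i j uw by auto
      have rot: "induced_cycle V E (rotate k X)" "length (rotate k X) = length X" "set (rotate k X) = set X"
        if "induced_cycle V E X" for k X using rot_ic[OF that] by simp_all
      have Cne: "C \<noteq> []" using n11 unfolding n_def by auto
      define C1 where "C1 = rotate t C"
      have ic1: "induced_cycle V E C1" and len1: "length C1 = n" and set1: "set C1 = set C"
        unfolding C1_def n_def using rot[OF icC] by auto
      have C10: "C1!0 = C!t" unfolding C1_def using nth_rotate[of 0 C t] t Cne unfolding n_def by simp
      have C11: "C1!1 = C!(Suc t mod n)" unfolding C1_def using nth_rotate[of 1 C t] t n11 Cne unfolding n_def by simp
      have core1: "\<forall>k<n. E v (C1!k) \<longleftrightarrow> (k = 2 \<or> k = n - 1)"
        by (rule case1core[OF ic1 len1]) (use vC set1 two C10 C11 t in simp_all)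
      define C2 where "C2 = rotate 3 C1"
      have ic2: "induced_cycle V E C2" and len2: "length C2 = n" and set2: "set C2 = set C"
        unfolding C2_def using rot[OF ic1] len1 set1 by auto
      have C2k: "C2!k = C1!(3+k)" if "k < 3" for k
        unfolding C2_def using nth_rotate[of k C1 3] that n11 len1 by simp
      have core2: "\<forall>k<n. E v (C2!k) \<longleftrightarrow> (k = 2 \<or> k = n - 1)"
        by (rule case1core[OF ic2 len2]) (use vC set2 two C2k[of 0] C2k[of 1] core1 n11 in simp_all)
      then have "E v (C2!2)" using n11 by simp
      moreover have "\<not> E v (C1!5)" using core1 n11 by simp
      ultimately show False using C2k[of 2] by simp
    qed
  qed
qed


end
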